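(* Let $X$ be a real Hilbert space and let $U,V,W$ be closed linear subspaces of $X$, with $Z := U\cap V\cap W$. Define the linear operator $M\colon X\times X\to X\times X\times X$ by \[ M(x,y) = \Big(P_Ux,\; P_VP_Ux+P_Vy,\; P_WP_Ux + P_WP_VP_Ux-P_Wx +P_WP_Vy-P_Wy\Big), \] and, writing $Q_i\colon X^3\to X$ for the projection onto the $i$-th coordinate, define the Ryu operator $T\colon X^2\to X^2$ by \[ T(z) = z + \big((Q_3-Q_1)Mz,\,(Q_3-Q_2)Mz\big). \] Let $0<\lambda<1$ and $(x_0,y_0)\in X\times X$, and generate $(x_k,y_k)_{k\in\mathbb N}$ via $(x_{k+1},y_{k+1}) = (1-\lambda)(x_k,y_k)+\lambda T(x_k,y_k)$. Then \[ M(x_k,y_k)\to \big(P_Z(x_0),P_Z(x_0),P_Z(x_0)\big) \] (in norm); in particular $P_U(x_k)\to P_Z(x_0)$.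
   Context: $P_S$ denotes the orthogonal projection onto a closed linear subspace $S$. The operator $M$ is the specialization of Ryu's splitting map $(x,y)\mapsto (J_A x, J_B(J_Ax+y), J_C(J_Ax - x + J_B(J_Ax+y)-y))$ to $A=N_U$, $B=N_V$, $C=N_W$ (normal cone operators), whose resolvents are $P_U,P_V,P_W$. *)

theory Defs
  imports "HOL-Analysis.Analysis"
begin

definition orth_proj :: "'a::{real_inner,complete_space} set \<Rightarrow> 'a \<Rightarrow> 'a" where
  "orth_proj S x = (THE p. p \<in> S \<and> (\<forall>s\<in>S. inner (x - p) s = 0))"

text \<open>Ryu's splitting map specialised to normal cones of U, V, W.\<close>
definition ryuM :: "'a::{real_inner,complete_space} set \<Rightarrow> 'a set \<Rightarrow> 'a set \<Rightarrow> 'a \<times> 'a \<Rightarrow> 'a \<times> 'a \<times> 'a" where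
  "ryuM U V W z = (case z of (x, y) \<Rightarrow>
     (orth_proj U x,
      orth_proj V (orth_proj U x) + orth_proj V y,
      orth_proj W (orth_proj U x) + orth_proj W (orth_proj V (orth_proj U x)) - orth_proj W x
        + orth_proj W (orth_proj V y) - orth_proj W y))"

definition Q1 :: "'a \<times> 'a \<times> 'a \<Rightarrow> 'a" where "Q1 t = fst t"
definition Q2 :: "'a \<times> 'a \<times> 'a \<Rightarrow> 'a" where "Q2 t = fst (snd t)"
definition Q3 :: "'a \<times> 'a \<times> 'a \<Rightarrow> 'a" where "Q3 t = snd (snd t)"

definition ryuT :: "'a::{real_inner,complete_space} set \<Rightarrow> 'a set \<Rightarrow> 'a set \<Rightarrow> 'a \<times> 'a \<Rightarrow> 'a \<times> 'a" where
  "ryuT U V W z = z + (Q3 (ryuM U V W z) - Q1 (ryuM U V W z), Q3 (ryuM U V W z) - Q2 (ryuM U V W z))"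

end

theory Submission
  imports Defs
begin


lemma proj_exists:
  fixes S :: "'a::{real_inner,complete_space} set"
  assumes sS: "subspace S" and cS: "closed S"
  shows "\<exists>p\<in>S. \<forall>s\<in>S. inner (x - p) s = 0"
proof -
  define D where "D = (\<lambda>s. norm (x - s)) ` S"
  define d where "d = Inf D"
  have "0 \<in> S" using sS by (simp add: subspace_0)
  hence Dne: "D \<noteq> {}" unfolding D_def by auto
  have Dbd: "bdd_below D" unfolding D_def by (rule bdd_belowI[of _ 0]) auto
  have dle: "d \<le> norm (x - s)" if "s \<in> S" for s
    unfolding d_def D_def using that Dbd D_def by (auto intro!: cInf_lower)
  have d0: "0 \<le> d" unfolding d_def using Dne by (rule cInf_greatest) (auto simp: D_def)
  have "\<exists>s\<in>S. (norm (x - s))^2 < d^2 + 1 / (real n + 1)" for n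
  proof -
    have "d < sqrt (d^2 + 1 / (real n + 1))"
      by (intro real_less_rsqrt) (simp add: add_pos_nonneg)
    then obtain t where "t \<in> D" "t < sqrt (d^2 + 1 / (real n + 1))"
      using cInf_lessD[OF Dne] unfolding d_def by blast
    then obtain s where s: "s \<in> S" "norm (x - s) < sqrt (d^2 + 1 / (real n + 1))"
      unfolding D_def by auto
    hence "(norm (x - s))^2 < (sqrt (d^2 + 1 / (real n + 1)))^2"
      by (intro power_strict_mono) auto
    hence "(norm (x - s))^2 < d^2 + 1 / (real n + 1)"
      by (simp add: add_nonneg_nonneg)
    then show ?thesis using s by blast
  qed
  then obtain f where f: "\<And>n. f n \<in> S" "\<And>n. (norm (x - f n))^2 < d^2 + 1 / (real n + 1)"
    by metis
  have para: "(norm (f n - f m))^2 \<le> 2 / (real n + 1) + 2 / (real m + 1)" for n m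
  proof -
    have mid: "(1/2) *\<^sub>R (f n + f m) \<in> S"
      using f(1) sS by (simp add: subspace_add subspace_scale)
    have "d \<le> norm (x - (1/2) *\<^sub>R (f n + f m))" using dle[OF mid] .
    hence h: "d^2 \<le> (norm (x - (1/2) *\<^sub>R (f n + f m)))^2" using d0 by (simp add: power_mono)
    have eq: "(norm (f n - f m))^2 = 2 * (norm (x - f n))^2 + 2 * (norm (x - f m))^2
              - 4 * (norm (x - (1/2) *\<^sub>R (f n + f m)))^2"
      unfolding power2_norm_eq_inner
      by (simp add: inner_diff_left inner_diff_right inner_add_left inner_add_right inner_commute algebra_simps)
    show ?thesis using eq h f(2)[of n] f(2)[of m] by linarith
  qed
  have "Cauchy f"
  proof (rule metric_CauchyI)
    fix e :: real assume e: "0 < e"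
    obtain N :: nat where N: "4 / e^2 < real N" using reals_Archimedean2 by blast
    have "\<forall>m\<ge>N. \<forall>n\<ge>N. dist (f m) (f n) < e"
    proof (intro allI impI)
      fix m n assume mn: "N \<le> m" "N \<le> n"
      have a: "2 / (real m + 1) \<le> 2 / (real N + 1)" using mn by (simp add: frac_le)
      have b: "2 / (real n + 1) \<le> 2 / (real N + 1)" using mn by (simp add: frac_le)
      have "4 / (real N + 1) < e^2"
      proof -
        have h1: "4 < real N * e^2" using N e by (simp add: field_simps)
        have h2: "0 < e^2" using e by simp
        have h3: "e^2 * (real N + 1) = real N * e^2 + e^2" by (simp add: algebra_simps)
        have "4 < e^2 * (real N + 1)" using h1 h2 h3 by linarith
        thus ?thesis by (simp add: pos_divide_less_eq)
      qed
      hence "(norm (f m - f n))^2 < e^2" using para[of m n] a b by linarith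
      thus "dist (f m) (f n) < e" using e by (simp add: dist_norm power_less_imp_less_base)
    qed
    thus "\<exists>M. \<forall>m\<ge>M. \<forall>n\<ge>M. dist (f m) (f n) < e" by blast
  qed
  then obtain p where fp: "f \<longlonglongrightarrow> p" using Cauchy_convergent convergent_def by blast
  have pS: "p \<in> S" using closed_sequentially[OF cS] f(1) fp by blast
  have "(\<lambda>n. (norm (x - f n))^2) \<longlonglongrightarrow> (norm (x - p))^2"
    by (intro tendsto_intros fp)
  moreover have "(\<lambda>n. d^2 + 1 / (real n + 1)) \<longlonglongrightarrow> d^2 + 0"
  proof -
    have e: "(\<lambda>n. 1/(real n + 1)) = (\<lambda>n. inverse (real (Suc n)))"
      by (auto simp: inverse_eq_divide add.commute)
    have "(\<lambda>n. 1/(real n + 1)) \<longlonglongrightarrow> 0" unfolding e by (rule LIMSEQ_inverse_real_of_nat)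
    thus ?thesis by (intro tendsto_add tendsto_const)
  qed
  ultimately have pd: "(norm (x - p))^2 \<le> d^2"
    using f(2) by (intro LIMSEQ_le) (auto intro: less_imp_le)
  have "inner (x - p) s = 0" if sS': "s \<in> S" for s
  proof -
    define a where "a = inner (x - p) s"
    define b where "b = (norm s)^2"
    define t where "t = a / (b + 1)"
    have b0: "0 \<le> b" unfolding b_def by simp
    have "p + t *\<^sub>R s \<in> S" using pS sS' sS by (simp add: subspace_add subspace_scale)
    hence "d^2 \<le> (norm (x - (p + t *\<^sub>R s)))^2" using dle d0 by (simp add: power_mono)
    also have "\<dots> = (norm (x - p))^2 - 2 * t * a + t^2 * b"
      unfolding power2_norm_eq_inner a_def b_def
      by (simp add: inner_diff_left inner_diff_right inner_add_left inner_add_right inner_commute algebra_simps power2_eq_square)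
    finally have "0 \<le> - 2 * t * a + t^2 * b" using pd by linarith
    hence "0 \<le> (- 2 * t * a + t^2 * b) * (b+1)^2" using b0 by simp
    also have "\<dots> = -(a^2 * (b + 2))"
    proof -
      have b1: "b + 1 \<noteq> 0" using b0 by linarith
      have "a = t * (b + 1)" unfolding t_def using b1 by simp
      thus ?thesis by (simp add: power2_eq_square algebra_simps)
    qed
    finally have "a^2 * (b+2) \<le> 0" by simp
    hence "a^2 \<le> 0" using b0 by (simp add: mult_le_0_iff)
    thus ?thesis unfolding a_def by simp
  qed
  thus ?thesis using pS by blast
qed

lemma orth_proj_char:
  fixes S :: "'a::{real_inner,complete_space} set"
  assumes sS: "subspace S" and cS: "closed S" and p: "p \<in> S" "\<forall>s\<in>S. inner (x - p) s = 0"
  shows "orth_proj S x = p"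
  unfolding orth_proj_def
proof (rule the_equality)
  show "p \<in> S \<and> (\<forall>s\<in>S. inner (x - p) s = 0)" using p by blast
next
  fix q assume q: "q \<in> S \<and> (\<forall>s\<in>S. inner (x - q) s = 0)"
  have pq: "p - q \<in> S" using p q sS by (simp add: subspace_diff)
  have "inner (x - q) (p - q) = 0" "inner (x - p) (p - q) = 0" using q p pq by auto
  hence "inner (p - q) (p - q) = 0" by (simp add: inner_diff_left inner_diff_right algebra_simps)
  thus "q = p" by simp
qed

lemma orth_proj_props:
  fixes S :: "'a::{real_inner,complete_space} set"
  assumes sS: "subspace S" and cS: "closed S"
  shows "orth_proj S x \<in> S" "\<And>s. s \<in> S \<Longrightarrow> inner (x - orth_proj S x) s = 0"
proof -
  obtain p where p: "p \<in> S" "\<forall>s\<in>S. inner (x - p) s = 0" using proj_exists[OF sS cS] by blast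
  have e: "orth_proj S x = p" by (rule orth_proj_char[OF sS cS p])
  show "orth_proj S x \<in> S" using e p by simp
  show "\<And>s. s \<in> S \<Longrightarrow> inner (x - orth_proj S x) s = 0" using e p by simp
qed

lemma orth_proj_bl:
  fixes S :: "'a::{real_inner,complete_space} set"
  assumes sS: "subspace S" and cS: "closed S"
  shows "bounded_linear (orth_proj S)"
proof (rule bounded_linear_intro[where K=1])
  note P = orth_proj_props[OF sS cS]
  fix x y
  show "orth_proj S (x + y) = orth_proj S x + orth_proj S y"
  proof (rule orth_proj_char[OF sS cS])
    show "orth_proj S x + orth_proj S y \<in> S" using P sS by (simp add: subspace_add)
    show "\<forall>s\<in>S. inner (x + y - (orth_proj S x + orth_proj S y)) s = 0"
    proof
      fix s assume "s \<in> S"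
      hence "inner (x - orth_proj S x) s = 0" "inner (y - orth_proj S y) s = 0" using P by auto
      thus "inner (x + y - (orth_proj S x + orth_proj S y)) s = 0"
        by (simp add: inner_diff_left inner_add_left algebra_simps)
    qed
  qed
next
  note P = orth_proj_props[OF sS cS]
  fix r x
  show "orth_proj S (r *\<^sub>R x) = r *\<^sub>R orth_proj S x"
  proof (rule orth_proj_char[OF sS cS])
    show "r *\<^sub>R orth_proj S x \<in> S" using P sS by (simp add: subspace_scale)
    show "\<forall>s\<in>S. inner (r *\<^sub>R x - r *\<^sub>R orth_proj S x) s = 0"
    proof
      fix s assume "s \<in> S"
      hence "inner (x - orth_proj S x) s = 0" using P by auto
      thus "inner (r *\<^sub>R x - r *\<^sub>R orth_proj S x) s = 0"
        by (simp add: inner_diff_left algebra_simps)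
    qed
  qed
next
  note P = orth_proj_props[OF sS cS]
  fix x
  have "inner (x - orth_proj S x) (orth_proj S x) = 0" using P by auto
  hence "(norm (orth_proj S x))^2 = inner x (orth_proj S x)"
    by (simp add: inner_diff_left power2_norm_eq_inner)
  also have "\<dots> \<le> norm x * norm (orth_proj S x)" by (rule Cauchy_Schwarz_ineq2[THEN order_trans[OF abs_ge_self]])
  finally have "norm (orth_proj S x) * norm (orth_proj S x) \<le> norm x * norm (orth_proj S x)"
    by (simp add: power2_eq_square)
  thus "norm (orth_proj S x) \<le> norm x * 1"
    by (cases "norm (orth_proj S x) = 0") auto
qed

lemma orth_proj_id:
  fixes S :: "'a::{real_inner,complete_space} set"
  assumes sS: "subspace S" and cS: "closed S" and "x \<in> S"
  shows "orth_proj S x = x"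
  using assms by (intro orth_proj_char) auto

lemma orth_proj_sub:
  fixes S W :: "'a::{real_inner,complete_space} set"
  assumes sS: "subspace S" and cS: "closed S" and sW: "subspace W" and cW: "closed W" and SW: "S \<subseteq> W"
  shows "orth_proj S x = orth_proj S (orth_proj W x)"
proof (rule orth_proj_char[OF sS cS])
  note P = orth_proj_props[OF sS cS] and Q = orth_proj_props[OF sW cW]
  show "orth_proj S (orth_proj W x) \<in> S" using P by simp
  show "\<forall>s\<in>S. inner (x - orth_proj S (orth_proj W x)) s = 0"
  proof
    fix s assume s: "s \<in> S"
    have "inner (x - orth_proj W x) s = 0" using Q s SW by auto
    moreover have "inner (orth_proj W x - orth_proj S (orth_proj W x)) s = 0" using P s by auto
    ultimately show "inner (x - orth_proj S (orth_proj W x)) s = 0"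
      by (simp add: inner_diff_left)
  qed
qed

lemma subspace_closure':
  fixes S :: "'a::real_normed_vector set"
  assumes "subspace S"
  shows "subspace (closure S)"
  unfolding subspace_def
proof (intro conjI ballI allI)
  show "0 \<in> closure S" using assms subspace_0 closure_subset by blast
next
  fix x y assume "x \<in> closure S" "y \<in> closure S"
  then obtain f g where f: "\<forall>n. f n \<in> S" "f \<longlonglongrightarrow> x" and g: "\<forall>n. g n \<in> S" "g \<longlonglongrightarrow> y"
    unfolding closure_sequential by blast
  have A: "\<forall>n. f n + g n \<in> S" using f g assms by (simp add: subspace_add)
  have B: "(\<lambda>n. f n + g n) \<longlonglongrightarrow> x + y" using f g by (intro tendsto_add) auto
  show "x + y \<in> closure S" unfolding closure_sequential
    by (rule exI[of _ "\<lambda>n. f n + g n"]) (simp add: A B)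
next
  fix c x assume "x \<in> closure S"
  then obtain f where f: "\<forall>n. f n \<in> S" "f \<longlonglongrightarrow> x"
    unfolding closure_sequential by blast
  have A: "\<forall>n. c *\<^sub>R f n \<in> S" using f assms by (simp add: subspace_scale)
  have B: "(\<lambda>n. c *\<^sub>R f n) \<longlonglongrightarrow> c *\<^sub>R x" using f by (intro tendsto_scaleR) auto
  show "c *\<^sub>R x \<in> closure S" unfolding closure_sequential
    by (rule exI[of _ "\<lambda>n. c *\<^sub>R f n"]) (simp add: A B)
qed



lemma lin_iter_conv:
  fixes S :: "'b::{real_inner,complete_space} \<Rightarrow> 'b"
  assumes lin: "linear S" and K: "K > 0"
    and ineq: "\<And>z. (norm (S z - z))^2 \<le> K * ((norm z)^2 - (norm (S z))^2)"
  shows "\<exists>p. S p = p \<and> (\<lambda>k. (S^^k) z) \<longlonglongrightarrow> p"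
proof -
  have nexp: "norm (S v) \<le> norm v" for v
  proof -
    have "0 \<le> (norm (S v - v))^2" by simp
    hence "0 \<le> K * ((norm v)^2 - (norm (S v))^2)" using ineq[of v] by linarith
    hence "(norm (S v))^2 \<le> (norm v)^2" using K mult_pos_neg[of K "(norm v)^2 - (norm (S v))^2"] by linarith
    thus ?thesis by (rule power2_le_imp_le) simp
  qed
  have linp: "linear (S^^k)" for k
  proof (induction k)
    case 0 show ?case using bounded_linear.linear[OF bounded_linear_ident] by simp
  next
    case (Suc k) show ?case using linear_compose[OF Suc.IH lin] by (simp add: o_def)
  qed
  have nexpk: "norm ((S^^k) v) \<le> norm v" for k v
  proof (induction k)
    case 0 then show ?case by simp
  next
    case (Suc k) then show ?case using order_trans[OF nexp[of "(S^^k) v"] Suc.IH] by simp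
  qed
  have asym: "(\<lambda>k. (S^^k) v - (S^^(Suc k)) v) \<longlonglongrightarrow> 0" for v
  proof -
    define n where "n k = (norm ((S^^k) v))^2" for k
    have dec: "decseq n" unfolding n_def
      by (rule decseq_SucI) (simp add: power_mono[OF nexp norm_ge_zero])
    obtain L where L: "n \<longlonglongrightarrow> L" using decseq_convergent[OF dec, of 0] unfolding n_def by auto
    have d0: "(\<lambda>k. n k - n (Suc k)) \<longlonglongrightarrow> L - L"
      by (intro tendsto_diff L LIMSEQ_Suc)
    have sq: "(\<lambda>k. (norm ((S^^k) v - (S^^(Suc k)) v))^2) \<longlonglongrightarrow> 0"
    proof (rule tendsto_sandwich[of "\<lambda>_. 0" _ _ "\<lambda>k. K * (n k - n (Suc k))"])
      show "\<forall>\<^sub>F k in sequentially. 0 \<le> (norm ((S^^k) v - (S^^(Suc k)) v))^2" by simp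
      show "\<forall>\<^sub>F k in sequentially. (norm ((S^^k) v - (S^^(Suc k)) v))^2 \<le> K * (n k - n (Suc k))"
      proof (rule always_eventually, rule allI)
        fix k
        have "(norm (S ((S^^k) v) - (S^^k) v))^2 \<le> K * (n k - n (Suc k))"
          using ineq[of "(S^^k) v"] unfolding n_def by simp
        thus "(norm ((S^^k) v - (S^^(Suc k)) v))^2 \<le> K * (n k - n (Suc k))"
          by (simp add: norm_minus_commute)
      qed
      show "(\<lambda>_. 0::real) \<longlonglongrightarrow> 0" by simp
      show "(\<lambda>k. K * (n k - n (Suc k))) \<longlonglongrightarrow> 0"
        using tendsto_mult[OF tendsto_const[of K] d0] by simp
    qed
    have "(\<lambda>k. sqrt ((norm ((S^^k) v - (S^^(Suc k)) v))^2)) \<longlonglongrightarrow> sqrt 0"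
      by (intro tendsto_real_sqrt sq)
    hence "(\<lambda>k. norm ((S^^k) v - (S^^(Suc k)) v)) \<longlonglongrightarrow> 0" by simp
    thus ?thesis by (simp add: tendsto_norm_zero_iff)
  qed
  define R where "R = range (\<lambda>v. v - S v)"
  have linI: "linear (\<lambda>v. v - S v)" by (rule linear_compose_sub[OF bounded_linear.linear[OF bounded_linear_ident] lin])
  have sR: "subspace R" unfolding R_def by (rule linear_subspace_image[OF linI subspace_UNIV])
  have sC: "subspace (closure R)" by (rule subspace_closure'[OF sR])
  have cC: "closed (closure R)" by simp
  have conv0: "(\<lambda>k. (S^^k) r) \<longlonglongrightarrow> 0" if r: "r \<in> closure R" for r
  proof (rule LIMSEQ_I)
    fix e :: real assume e: "0 < e"
    have A: "\<forall>d>0. \<exists>y\<in>R. dist y r < d" using r by (simp only: closure_approachable)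
    have "e/2 > 0" using e by simp
    then obtain r' where r': "r' \<in> R" "dist r' r < e/2" using A by blast
    obtain v where v: "r' = v - S v" using r' unfolding R_def by auto
    have eqk: "(S^^k) r' = (S^^k) v - (S^^(Suc k)) v" for k
      unfolding v using linear_diff[OF linp[of k]] by (simp add: funpow_swap1)
    obtain N where N: "\<And>k. k \<ge> N \<Longrightarrow> norm ((S^^k) v - (S^^(Suc k)) v - 0) < e/2"
      using LIMSEQ_D[OF asym[of v], of "e/2"] e by auto
    show "\<exists>N. \<forall>k\<ge>N. norm ((S^^k) r - 0) < e"
    proof (intro exI allI impI)
      fix k assume k: "N \<le> k"
      have "(S^^k) r = (S^^k) r' + (S^^k) (r - r')" using linear_diff[OF linp[of k], of r r'] by simp
      hence "norm ((S^^k) r) \<le> norm ((S^^k) r') + norm ((S^^k) (r - r'))"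
        using norm_triangle_ineq[of "(S^^k) r'" "(S^^k) (r - r')"] by simp
      also have "\<dots> \<le> norm ((S^^k) r') + norm (r - r')" using nexpk by simp
      also have "\<dots> < e/2 + e/2"
      proof -
        have "norm ((S^^k) r') < e/2" using N[OF k] unfolding eqk[of k] by simp
        moreover have "norm (r - r') < e/2" using r'(2) by (simp add: dist_norm norm_minus_commute)
        ultimately show ?thesis by linarith
      qed
      finally show "norm ((S^^k) r - 0) < e" by simp
    qed
  qed
  obtain q where q: "q \<in> closure R" "\<forall>s\<in>closure R. inner (z - q) s = 0" using proj_exists[OF sC cC] by blast
  define p where "p = z - q"
  have "p - S p \<in> R" unfolding R_def by (rule rangeI)
  hence "p - S p \<in> closure R" using closure_subset by blast
  hence "inner p (p - S p) = 0" unfolding p_def using q(2) by simp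
  hence ip: "inner p (S p) = (norm p)^2" by (simp add: inner_diff_right power2_norm_eq_inner)
  have "(norm (S p - p))^2 = (norm (S p))^2 - 2 * inner p (S p) + (norm p)^2"
    unfolding power2_norm_eq_inner by (simp add: inner_diff_left inner_diff_right inner_commute)
  also have "\<dots> \<le> 0" using ip power_mono[OF nexp[of p] norm_ge_zero, of 2] by simp
  finally have Sp: "S p = p" by simp
  have Skp: "(S^^k) p = p" for k by (induction k) (simp_all add: Sp)
  have "(\<lambda>k. (S^^k) z) = (\<lambda>k. p + (S^^k) q)"
  proof
    fix k
    have "z = p + q" unfolding p_def by simp
    hence "(S^^k) z = (S^^k) p + (S^^k) q" using linear_add[OF linp[of k]] by simp
    thus "(S^^k) z = p + (S^^k) q" using Skp by simp
  qed
  moreover have "(\<lambda>k. p + (S^^k) q) \<longlonglongrightarrow> p + 0" by (intro tendsto_add tendsto_const conv0 q(1))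
  ultimately show ?thesis using Sp by auto
qed



lemma energy:
  fixes x y a b c :: "'a::real_inner" and l :: real
  assumes h1: "inner (x - a) a = 0" and h2: "inner (a + y - b) b = 0"
    and h3: "inner (a - x + b - y - c) c = 0"
  shows "(norm x)^2 + (norm y)^2 - ((norm (x + l *\<^sub>R (c - a)))^2 + (norm (y + l *\<^sub>R (c - b)))^2)
     = l * (norm (a - b))^2 + l * (1 - l) * ((norm (c - a))^2 + (norm (c - b))^2)"
proof -
  have E: "2 * inner x (c - a) + 2 * inner y (c - b) + inner (c - a) (c - a) + inner (c - b) (c - b)
       + inner (a - b) (a - b) = 0"
    using h1 h2 h3 by (simp add: inner_diff_left inner_diff_right inner_add_left inner_add_right inner_commute algebra_simps)
  have n1: "(norm (x + l *\<^sub>R (c - a)))^2 = (norm x)^2 + 2 * l * inner x (c - a) + l^2 * inner (c - a) (c - a)"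
    unfolding power2_norm_eq_inner by (simp add: inner_add_left inner_add_right inner_commute power2_eq_square algebra_simps)
  have n2: "(norm (y + l *\<^sub>R (c - b)))^2 = (norm y)^2 + 2 * l * inner y (c - b) + l^2 * inner (c - b) (c - b)"
    unfolding power2_norm_eq_inner by (simp add: inner_add_left inner_add_right inner_commute power2_eq_square algebra_simps)
  have D: "inner (a - b) (a - b) = - (2 * inner x (c - a) + 2 * inner y (c - b) + inner (c - a) (c - a) + inner (c - b) (c - b))"
    using E by linarith
  show ?thesis unfolding n1 n2 unfolding power2_norm_eq_inner[of "a - b"] power2_norm_eq_inner[of "c - a"] power2_norm_eq_inner[of "c - b"] D
    by (simp add: algebra_simps power2_eq_square)
qed

lemma ryuM_form:
  fixes U V W :: "'a::{real_inner,complete_space} set"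
  assumes "subspace V" "closed V" "subspace W" "closed W"
  shows "ryuM U V W (x, y) = (orth_proj U x, orth_proj V (orth_proj U x + y),
           orth_proj W (orth_proj U x - x + orth_proj V (orth_proj U x + y) - y))"
proof -
  have LV: "linear (orth_proj V)" using orth_proj_bl[OF assms(1,2)] by (rule bounded_linear.linear)
  have LW: "linear (orth_proj W)" using orth_proj_bl[OF assms(3,4)] by (rule bounded_linear.linear)
  show ?thesis
    by (simp add: ryuM_def linear_add[OF LV] linear_add[OF LW] linear_diff[OF LW] algebra_simps)
qed

lemma ryuM_bl:
  fixes U V W :: "'a::{real_inner,complete_space} set"
  assumes "subspace U" "closed U" "subspace V" "closed V" "subspace W" "closed W"
  shows "bounded_linear (ryuM U V W)"
proof -
  note BU = orth_proj_bl[OF assms(1,2)] and BV = orth_proj_bl[OF assms(3,4)] and BW = orth_proj_bl[OF assms(5,6)]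
  have e: "ryuM U V W = (\<lambda>z. (orth_proj U (fst z),
      orth_proj V (orth_proj U (fst z)) + orth_proj V (snd z),
      orth_proj W (orth_proj U (fst z)) + orth_proj W (orth_proj V (orth_proj U (fst z))) - orth_proj W (fst z)
        + orth_proj W (orth_proj V (snd z)) - orth_proj W (snd z)))"
    unfolding ryuM_def by (rule ext) (simp add: case_prod_beta)
  show ?thesis unfolding e
    by (intro bounded_linear_Pair bounded_linear_add bounded_linear_sub
        bounded_linear_compose[OF BU] bounded_linear_compose[OF BV] bounded_linear_compose[OF BW]
        bounded_linear_fst bounded_linear_snd)
qed

theorem mainTheorem1:
  fixes U V W :: "'a::{real_inner,complete_space} set"
    and lam :: real
    and x y :: "nat \<Rightarrow> 'a"
  assumes "subspace U" "closed U"
    and "subspace V" "closed V"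
    and "subspace W" "closed W"
    and "0 < lam" "lam < 1"
    and "\<And>k. (x (Suc k), y (Suc k)) = (1 - lam) *\<^sub>R (x k, y k) + lam *\<^sub>R ryuT U V W (x k, y k)"
  shows "(\<lambda>k. ryuM U V W (x k, y k)) \<longlonglongrightarrow>
           (orth_proj (U \<inter> V \<inter> W) (x 0), orth_proj (U \<inter> V \<inter> W) (x 0), orth_proj (U \<inter> V \<inter> W) (x 0))
       \<and> (\<lambda>k. orth_proj U (x k)) \<longlonglongrightarrow> orth_proj (U \<inter> V \<inter> W) (x 0)"
proof -
  note sU = assms(1) and cU = assms(2) and sV = assms(3) and cV = assms(4) and sW = assms(5) and cW = assms(6)
  note l0 = assms(7) and l1 = assms(8) and rec = assms(9)
  define Z where "Z = U \<inter> V \<inter> W"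
  have sZ: "subspace Z" unfolding Z_def using sU sV sW by (simp add: subspace_inter)
  have cZ: "closed Z" unfolding Z_def using cU cV cW by (simp add: closed_Int)
  note PU = orth_proj_props[OF sU cU] and PV = orth_proj_props[OF sV cV] and PW = orth_proj_props[OF sW cW]
    and PZ = orth_proj_props[OF sZ cZ]
  have LZ: "linear (orth_proj Z)" using orth_proj_bl[OF sZ cZ] by (rule bounded_linear.linear)
  define S where "S z = (1 - lam) *\<^sub>R z + lam *\<^sub>R ryuT U V W z" for z
  have Mbl: "bounded_linear (ryuM U V W)" by (rule ryuM_bl[OF assms(1-6)])
  have Tform: "ryuT U V W (u, v) = (u + (orth_proj W (orth_proj U u - u + orth_proj V (orth_proj U u + v) - v) - orth_proj U u),
       v + (orth_proj W (orth_proj U u - u + orth_proj V (orth_proj U u + v) - v) - orth_proj V (orth_proj U u + v)))" for u v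
    unfolding ryuT_def ryuM_form[OF sV cV sW cW] by (simp add: Q1_def Q2_def Q3_def)
  have Sform: "S (u, v) = (u + lam *\<^sub>R (orth_proj W (orth_proj U u - u + orth_proj V (orth_proj U u + v) - v) - orth_proj U u),
       v + lam *\<^sub>R (orth_proj W (orth_proj U u - u + orth_proj V (orth_proj U u + v) - v) - orth_proj V (orth_proj U u + v)))" for u v
    unfolding S_def Tform by (simp add: algebra_simps)
  have Tbl: "bounded_linear (ryuT U V W)"
  proof -
    have e: "ryuT U V W = (\<lambda>z. z + (snd (snd (ryuM U V W z)) - fst (ryuM U V W z),
                 snd (snd (ryuM U V W z)) - fst (snd (ryuM U V W z))))"
      unfolding ryuT_def Q1_def Q2_def Q3_def by (rule ext) simp
    show ?thesis unfolding e
      by (intro bounded_linear_add bounded_linear_ident bounded_linear_Pair bounded_linear_sub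
          bounded_linear_compose[OF bounded_linear_fst] bounded_linear_compose[OF bounded_linear_snd] Mbl)
  qed
  have Sbl: "bounded_linear S" unfolding S_def
    by (intro bounded_linear_add bounded_linear_compose[OF bounded_linear_scaleR_right] Tbl bounded_linear_ident)
  define K where "K = lam / (1 - lam)"
  have K0: "K > 0" unfolding K_def using l0 l1 by simp
  have ineq: "(norm (S z - z))^2 \<le> K * ((norm z)^2 - (norm (S z))^2)" for z
  proof -
    obtain u v where z: "z = (u, v)" by fastforce
    define a where "a = orth_proj U u"
    define b where "b = orth_proj V (a + v)"
    define c where "c = orth_proj W (a - u + b - v)"
    have Sz: "S z = (u + lam *\<^sub>R (c - a), v + lam *\<^sub>R (c - b))"
      unfolding z Sform a_def b_def c_def ..
    have h1: "inner (u - a) a = 0" unfolding a_def using PU by blast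
    have h2: "inner (a + v - b) b = 0" unfolding b_def using PV by blast
    have h3: "inner (a - u + b - v - c) c = 0" unfolding c_def using PW by blast
    note E = energy[OF h1 h2 h3, of lam]
    have nz: "(norm z)^2 = (norm u)^2 + (norm v)^2" unfolding z norm_Pair by simp
    have nSz: "(norm (S z))^2 = (norm (u + lam *\<^sub>R (c - a)))^2 + (norm (v + lam *\<^sub>R (c - b)))^2"
      unfolding Sz norm_Pair by simp
    have Szz: "S z - z = (lam *\<^sub>R (c - a), lam *\<^sub>R (c - b))" unfolding Sz by (simp add: z)
    have nd: "(norm (S z - z))^2 = lam^2 * ((norm (c - a))^2 + (norm (c - b))^2)"
      unfolding Szz norm_Pair by (simp add: power_mult_distrib distrib_left)
    have "K * ((norm z)^2 - (norm (S z))^2) = K * lam * (norm (a - b))^2 + lam^2 * ((norm (c - a))^2 + (norm (c - b))^2)"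
    proof -
      have l1': "1 - lam \<noteq> 0" using l1 by simp
      show ?thesis unfolding nz nSz E K_def using l1' by (simp add: field_simps power2_eq_square)
    qed
    moreover have "0 \<le> K * lam * (norm (a - b))^2" using K0 l0 by simp
    ultimately show ?thesis unfolding nd by linarith
  qed
  obtain p where Sp: "S p = p" and conv: "(\<lambda>k. (S^^k) (x 0, y 0)) \<longlonglongrightarrow> p"
    using lin_iter_conv[OF bounded_linear.linear[OF Sbl] K0 ineq] by blast
  have xy: "(x k, y k) = (S^^k) (x 0, y 0)" for k
  proof (induction k)
    case 0 show ?case by simp
  next
    case (Suc k) show ?case using rec[of k] Suc.IH unfolding S_def by simp
  qed
  have xy': "(\<lambda>k. (x k, y k)) = (\<lambda>k. (S^^k) (x 0, y 0))" by (rule ext) (rule xy)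
  have conv': "(\<lambda>k. (x k, y k)) \<longlonglongrightarrow> p" unfolding xy' by (rule conv)
  obtain p1 p2 where p: "p = (p1, p2)" by fastforce
  define a where "a = orth_proj U p1"
  define b where "b = orth_proj V (a + p2)"
  define c where "c = orth_proj W (a - p1 + b - p2)"
  have "S p = (p1 + lam *\<^sub>R (c - a), p2 + lam *\<^sub>R (c - b))"
    unfolding p Sform a_def b_def c_def ..
  hence "lam *\<^sub>R (c - a) = 0" "lam *\<^sub>R (c - b) = 0" using Sp unfolding p by auto
  hence ca: "c = a" and cb: "c = b" using l0 by auto
  have Mp: "ryuM U V W p = (a, a, a)"
    unfolding p ryuM_form[OF sV cV sW cW] using ca cb unfolding a_def b_def c_def by simp
  have aZ: "a \<in> Z" unfolding Z_def using PU(1)[of p1] PV(1)[of "a + p2"] PW(1)[of "a - p1 + b - p2"]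
    ca cb unfolding a_def b_def c_def by auto
  have aP: "orth_proj Z p1 = a"
  proof (rule orth_proj_char[OF sZ cZ aZ])
    show "\<forall>s\<in>Z. inner (p1 - a) s = 0" unfolding a_def Z_def using PU(2) by blast
  qed
  have inv: "orth_proj Z (x (Suc k)) = orth_proj Z (x k)" for k
  proof -
    define a' where "a' = orth_proj U (x k)"
    define b' where "b' = orth_proj V (a' + y k)"
    define c' where "c' = orth_proj W (a' - x k + b' - y k)"
    have "S (x k, y k) = (x k + lam *\<^sub>R (c' - a'), y k + lam *\<^sub>R (c' - b'))"
      unfolding Sform a'_def b'_def c'_def ..
    hence xs: "x (Suc k) = x k + lam *\<^sub>R (c' - a')" using rec[of k] unfolding S_def by simp
    have ZU: "Z \<subseteq> U" "Z \<subseteq> V" "Z \<subseteq> W" unfolding Z_def by auto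
    have za: "orth_proj Z a' = orth_proj Z (x k)" unfolding a'_def
      using orth_proj_sub[OF sZ cZ sU cU ZU(1)] by simp
    have zb: "orth_proj Z b' = orth_proj Z (x k) + orth_proj Z (y k)" unfolding b'_def
      using orth_proj_sub[OF sZ cZ sV cV ZU(2), of "a' + y k"] za linear_add[OF LZ] by simp
    have zc: "orth_proj Z c' = orth_proj Z (x k)" unfolding c'_def
      using orth_proj_sub[OF sZ cZ sW cW ZU(3), of "a' - x k + b' - y k"] za zb
        linear_add[OF LZ] linear_diff[OF LZ] by simp
    show ?thesis unfolding xs using za zc linear_add[OF LZ] linear_diff[OF LZ] linear_scale[OF LZ] by simp
  qed
  have invk: "orth_proj Z (x k) = orth_proj Z (x 0)" for k
    by (induction k) (simp_all add: inv)
  have xconv: "x \<longlonglongrightarrow> p1" using tendsto_fst[OF conv'] unfolding p by simp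
  have "(\<lambda>k. orth_proj Z (x k)) \<longlonglongrightarrow> orth_proj Z p1"
    by (rule bounded_linear.tendsto[OF orth_proj_bl[OF sZ cZ] xconv])
  moreover have "(\<lambda>k. orth_proj Z (x k)) = (\<lambda>k. orth_proj Z (x 0))" by (rule ext) (rule invk)
  ultimately have "(\<lambda>k. orth_proj Z (x 0)) \<longlonglongrightarrow> orth_proj Z p1" by simp
  hence ZZ: "orth_proj Z (x 0) = a" using aP LIMSEQ_unique[OF tendsto_const] by metis
  have Mconv: "(\<lambda>k. ryuM U V W (x k, y k)) \<longlonglongrightarrow> ryuM U V W p"
    by (rule bounded_linear.tendsto[OF Mbl conv'])
  have first: "(\<lambda>k. ryuM U V W (x k, y k)) \<longlonglongrightarrow> (orth_proj Z (x 0), orth_proj Z (x 0), orth_proj Z (x 0))"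
    using Mconv unfolding Mp ZZ .
  have "(\<lambda>k. fst (ryuM U V W (x k, y k))) \<longlonglongrightarrow> orth_proj Z (x 0)"
    using tendsto_fst[OF first] by simp
  hence second: "(\<lambda>k. orth_proj U (x k)) \<longlonglongrightarrow> orth_proj Z (x 0)"
    by (simp add: ryuM_def)
  show ?thesis using first second unfolding Z_def by blast
qed


end
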